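(* For every graph $G=(V,E)$, the projection onto the $x$-variables of the linear relaxation of $\mathcal{E}(G)$ is contained in the linear relaxation of $\mathcal{N}_2(G)$; consequently, for every weight vector $w$, the linear relaxation value of $\mathcal{E}(G)$ is at most that of $\mathcal{N}_2(G)$. Moreover, the containment is strict when $G$ is the star $K_{1,3}$.
   Context: $N(u)$ is the neighborhood of $u$, $\delta(v)$ the set of edges incident to $v$, $x(A)=\sum_{a\in A}x_a$. Both formulations compute a maximum $w$-weighted co-2-plex (vertex set inducing maximum degree at most 1). $\mathcal{N}_2(G)=\max\{w^\top x: x\in\{0,1\}^V,\ x(N(u))+(|N(u)|-1)x_u\le|N(u)|\ \forall u\in V\}$. $\mathcal{E}(G)=\max\{w^\top x: (x,y)\in\{0,1\}^V\times\{0,1\}^E,\ y(\delta(v))\le x_v\ \forall v\in V,\ y_e\ge 0\ \forall e\in E,\ x_u+x_v-y_{uv}\le 1\ \forall uv\in E\}$. The linear relaxation of a formulation replaces the binary constraints by $[0,1]$ bounds. *)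

theory Defs
  imports Complex_Main
begin

definition graph :: "'a set \<Rightarrow> 'a set set \<Rightarrow> bool" where
  "graph V E \<longleftrightarrow> finite V \<and>
     (\<forall>e\<in>E. \<exists>u v. u \<noteq> v \<and> u \<in> V \<and> v \<in> V \<and> e = {u, v})"

definition nbhd :: "'a set \<Rightarrow> 'a set set \<Rightarrow> 'a \<Rightarrow> 'a set" where
  "nbhd V E u = {v \<in> V. {u, v} \<in> E}"

definition incident :: "'a set set \<Rightarrow> 'a \<Rightarrow> 'a set set" where
  "incident E v = {e \<in> E. v \<in> e}"

text \<open>Linear relaxation of N_2(G). Vectors in R^V are functions vanishing outside V.\<close>
definition LP_N2 :: "'a set \<Rightarrow> 'a set set \<Rightarrow> ('a \<Rightarrow> real) set" where
  "LP_N2 V E = {x. (\<forall>v. v \<notin> V \<longrightarrow> x v = 0) \<and>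
      (\<forall>v\<in>V. 0 \<le> x v \<and> x v \<le> 1) \<and>
      (\<forall>u\<in>V. sum x (nbhd V E u) + (real (card (nbhd V E u)) - 1) * x u
                \<le> real (card (nbhd V E u)))}"

text \<open>Linear relaxation of E(G). Vectors in R^E are functions vanishing outside E.\<close>
definition LP_E :: "'a set \<Rightarrow> 'a set set \<Rightarrow> (('a \<Rightarrow> real) \<times> ('a set \<Rightarrow> real)) set" where
  "LP_E V E = {(x, y). (\<forall>v. v \<notin> V \<longrightarrow> x v = 0) \<and> (\<forall>e. e \<notin> E \<longrightarrow> y e = 0) \<and>
      (\<forall>v\<in>V. 0 \<le> x v \<and> x v \<le> 1) \<and> (\<forall>e\<in>E. 0 \<le> y e \<and> y e \<le> 1) \<and>
      (\<forall>v\<in>V. sum y (incident E v) \<le> x v) \<and>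
      (\<forall>e\<in>E. y e \<ge> 0) \<and>
      (\<forall>u v. {u, v} \<in> E \<longrightarrow> x u + x v - y {u, v} \<le> 1)}"

definition LPval_N2 :: "'a set \<Rightarrow> 'a set set \<Rightarrow> ('a \<Rightarrow> real) \<Rightarrow> real" where
  "LPval_N2 V E w = Sup ((\<lambda>x. \<Sum>v\<in>V. w v * x v) ` LP_N2 V E)"

definition LPval_E :: "'a set \<Rightarrow> 'a set set \<Rightarrow> ('a \<Rightarrow> real) \<Rightarrow> real" where
  "LPval_E V E w = Sup ((\<lambda>(x, y). \<Sum>v\<in>V. w v * x v) ` LP_E V E)"

definition K13_V :: "nat set" where "K13_V = {0, 1, 2, 3}"
definition K13_E :: "nat set set" where "K13_E = {{0, 1}, {0, 2}, {0, 3}}"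

end

theory Submission
  imports Defs
begin

lemma sum_nbhd_incident:
  assumes g: "graph V E" and u: "u \<in> V"
  shows "sum y (incident E u) = (\<Sum>v\<in>nbhd V E u. y {u, v})"
proof -
  have inj: "inj_on (\<lambda>v. {u, v}) (nbhd V E u)"
  proof (rule inj_onI)
    fix a b assume a: "a \<in> nbhd V E u" and b: "b \<in> nbhd V E u" and eq: "{u, a} = {u, b}"
    from a have "{u,a} \<in> E" by (simp add: nbhd_def)
    then obtain p q where "p \<noteq> q" "{u,a} = {p,q}" using g unfolding graph_def by blast
    then have "a \<noteq> u" by auto
    with eq show "a = b" by (auto simp: doubleton_eq_iff)
  qed
  have img: "(\<lambda>v. {u, v}) ` nbhd V E u = incident E u"
  proof
    show "(\<lambda>v. {u, v}) ` nbhd V E u \<subseteq> incident E u"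
      by (auto simp: nbhd_def incident_def)
    show "incident E u \<subseteq> (\<lambda>v. {u, v}) ` nbhd V E u"
    proof
      fix e assume "e \<in> incident E u"
      then have e: "e \<in> E" "u \<in> e" by (auto simp: incident_def)
      then obtain p q where pq: "p \<noteq> q" "p \<in> V" "q \<in> V" "e = {p,q}"
        using g unfolding graph_def by blast
      show "e \<in> (\<lambda>v. {u, v}) ` nbhd V E u"
      proof (cases "u = p")
        case True
        then have "q \<in> nbhd V E u" using pq e by (auto simp: nbhd_def)
        then show ?thesis using pq True by auto
      next
        case False
        then have "u = q" using pq e by auto
        then have "p \<in> nbhd V E u" using pq e by (auto simp: nbhd_def insert_commute)
        then show ?thesis using pq \<open>u = q\<close> by (auto simp: insert_commute)
      qed
    qed
  qed
  show ?thesis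
    using sum.reindex[OF inj, of y] img by (simp add: comp_def)
qed

lemma proj_subset:
  assumes g: "graph V E"
  shows "fst ` LP_E V E \<subseteq> LP_N2 V E"
proof
  fix x assume "x \<in> fst ` LP_E V E"
  then obtain y where xy: "(x, y) \<in> LP_E V E" by force
  have fin: "finite V" using g by (simp add: graph_def)
  have out: "\<forall>v. v \<notin> V \<longrightarrow> x v = 0" and bnd: "\<forall>v\<in>V. 0 \<le> x v \<and> x v \<le> 1"
    and inc: "\<forall>v\<in>V. sum y (incident E v) \<le> x v"
    and edge: "\<forall>u v. {u, v} \<in> E \<longrightarrow> x u + x v - y {u, v} \<le> 1"
    using xy by (auto simp: LP_E_def)
  have "sum x (nbhd V E u) + (real (card (nbhd V E u)) - 1) * x u
                \<le> real (card (nbhd V E u))" if u: "u \<in> V" for u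
  proof -
    let ?N = "nbhd V E u"
    have "sum x ?N \<le> (\<Sum>v\<in>?N. 1 - x u + y {u, v})"
      by (rule sum_mono) (use edge in \<open>force simp: nbhd_def\<close>)
    also have "\<dots> = real (card ?N) - real (card ?N) * x u + (\<Sum>v\<in>?N. y {u, v})"
      by (simp add: sum.distrib sum_subtractf algebra_simps)
    also have "(\<Sum>v\<in>?N. y {u, v}) = sum y (incident E u)"
      by (rule sym[OF sum_nbhd_incident[OF g u]])
    also have "\<dots> \<le> x u" using inc u by auto
    finally show ?thesis by (simp add: algebra_simps)
  qed
  then show "x \<in> LP_N2 V E" using out bnd by (simp add: LP_N2_def)
qed

lemma val_le:
  assumes g: "graph V E"
  shows "LPval_E V E w \<le> LPval_N2 V E w"
proof -
  have eq: "(\<lambda>(x, y). \<Sum>v\<in>V. w v * x v) ` LP_E V E = (\<lambda>x. \<Sum>v\<in>V. w v * x v) ` (fst ` LP_E V E)"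
    by (force simp: image_image case_prod_beta)
  have ne: "((\<lambda>_. 0::real), (\<lambda>_. 0 :: real)) \<in> LP_E V E"
    by (simp add: LP_E_def incident_def)
  have bdd: "bdd_above ((\<lambda>x. \<Sum>v\<in>V. w v * x v) ` LP_N2 V E)"
  proof (rule bdd_aboveI2)
    fix x assume "x \<in> LP_N2 V E"
    then have b: "\<forall>v\<in>V. 0 \<le> x v \<and> x v \<le> 1" by (simp add: LP_N2_def)
    have "(\<Sum>v\<in>V. w v * x v) \<le> (\<Sum>v\<in>V. \<bar>w v\<bar>)"
    proof (rule sum_mono)
      fix v assume "v \<in> V"
      with b have "0 \<le> x v" "x v \<le> 1" by auto
      then have "w v * x v \<le> \<bar>w v\<bar> * x v" by (intro mult_right_mono) auto
      also have "\<dots> \<le> \<bar>w v\<bar>" using mult_left_le[of "x v" "\<bar>w v\<bar>"] \<open>x v \<le> 1\<close> by simp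
      finally show "w v * x v \<le> \<bar>w v\<bar>" .
    qed
    then show "(\<Sum>v\<in>V. w v * x v) \<le> (\<Sum>v\<in>V. \<bar>w v\<bar>)" .
  qed
  show ?thesis
    unfolding LPval_E_def LPval_N2_def eq
    by (rule cSup_subset_mono) (use ne bdd proj_subset[OF g] in auto)
qed

lemma K13_graph: "graph K13_V K13_E"
proof -
  have a: "\<exists>u v. u \<noteq> v \<and> u \<in> K13_V \<and> v \<in> K13_V \<and> {0::nat, k} = {u, v}" if "k \<in> {1,2,3}" for k
    by (rule exI[of _ 0], rule exI[of _ k]) (use that in \<open>auto simp: K13_V_def\<close>)
  show ?thesis unfolding graph_def
    using a by (auto simp: K13_V_def K13_E_def)
qed

definition xbad :: "nat \<Rightarrow> real" where
  "xbad v = (if v = 0 then 1/2 else if v = 1 \<or> v = 2 then 1 else 0)"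

lemma nb0: "nbhd K13_V K13_E 0 = {1,2,3}"
  by (auto simp: nbhd_def K13_V_def K13_E_def doubleton_eq_iff)
lemma nb1: "nbhd K13_V K13_E 1 = {0}"
  by (auto simp: nbhd_def K13_V_def K13_E_def doubleton_eq_iff)
lemma nb2: "nbhd K13_V K13_E 2 = {0}"
  by (auto simp: nbhd_def K13_V_def K13_E_def doubleton_eq_iff)
lemma nb3: "nbhd K13_V K13_E 3 = {0}"
  by (auto simp: nbhd_def K13_V_def K13_E_def doubleton_eq_iff)

lemma xbad_in: "xbad \<in> LP_N2 K13_V K13_E"
proof -
  have "\<forall>u\<in>K13_V. sum xbad (nbhd K13_V K13_E u) + (real (card (nbhd K13_V K13_E u)) - 1) * xbad u
                \<le> real (card (nbhd K13_V K13_E u))"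
  proof
    fix u assume "u \<in> K13_V"
    then have "u = 0 \<or> u = 1 \<or> u = 2 \<or> u = 3" by (simp add: K13_V_def)
    then show "sum xbad (nbhd K13_V K13_E u) + (real (card (nbhd K13_V K13_E u)) - 1) * xbad u
                \<le> real (card (nbhd K13_V K13_E u))"
      by (elim disjE) (simp_all add: nb0 nb1[simplified] nb2 nb3 xbad_def)
  qed
  then show ?thesis unfolding LP_N2_def by (auto simp: K13_V_def xbad_def)
qed

lemma xbad_out: "xbad \<notin> fst ` LP_E K13_V K13_E"
proof
  assume "xbad \<in> fst ` LP_E K13_V K13_E"
  then obtain y where xy: "(xbad, y) \<in> LP_E K13_V K13_E" by force
  have inc: "incident K13_E 0 = {{0,1},{0,2},{0,3}}"
    by (auto simp: incident_def K13_E_def)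
  have "\<forall>v\<in>K13_V. sum y (incident K13_E v) \<le> xbad v" using xy unfolding LP_E_def by blast
  then have "sum y (incident K13_E 0) \<le> xbad 0" by (simp add: K13_V_def)
  then have s: "y {0,1} + y {0,2} + y {0,3} \<le> 1/2"
    by (simp add: inc doubleton_eq_iff xbad_def)
  have ed: "\<forall>u v. {u, v} \<in> K13_E \<longrightarrow> xbad u + xbad v - y {u, v} \<le> 1"
    and ey: "\<forall>e\<in>K13_E. y e \<ge> 0" using xy unfolding LP_E_def by blast+
  have m: "{0::nat,1} \<in> K13_E" "{0::nat,2} \<in> K13_E" "{0::nat,3} \<in> K13_E" by (simp_all add: K13_E_def)
  have e1: "xbad 0 + xbad 1 - y {0,1} \<le> 1" using ed m(1) by blast
  have e2: "xbad 0 + xbad 2 - y {0,2} \<le> 1" using ed m(2) by blast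
  have e3: "y {0,3} \<ge> 0" using ey m(3) by blast
  show False using s e1 e2 e3 by (simp add: xbad_def)
qed

theorem mainTheorem16:
  shows "(\<forall>(V :: 'a set) E. graph V E \<longrightarrow>
            fst ` LP_E V E \<subseteq> LP_N2 V E \<and>
            (\<forall>w. LPval_E V E w \<le> LPval_N2 V E w))
         \<and> fst ` LP_E K13_V K13_E \<subset> LP_N2 K13_V K13_E"
proof (rule conjI)
  show "\<forall>(V :: 'a set) E. graph V E \<longrightarrow>
            fst ` LP_E V E \<subseteq> LP_N2 V E \<and>
            (\<forall>w. LPval_E V E w \<le> LPval_N2 V E w)"
    using proj_subset val_le by blast
  show "fst ` LP_E K13_V K13_E \<subset> LP_N2 K13_V K13_E"
  proof (rule psubsetI)
    show "fst ` LP_E K13_V K13_E \<subseteq> LP_N2 K13_V K13_E" by (rule proj_subset[OF K13_graph])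
    show "fst ` LP_E K13_V K13_E \<noteq> LP_N2 K13_V K13_E"
    proof
      assume "fst ` LP_E K13_V K13_E = LP_N2 K13_V K13_E"
      then show False using xbad_in xbad_out by simp
    qed
  qed
qed

end
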